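(* Let $\mathcal C$ be a concept hierarchy, $r_1,r_2,\epsilon\in[0,1]$ with $r_1\le r_2(1-\epsilon)$, $m$ a positive integer, and let $\mathcal H$ be the network defined below with a fixed failed set $F$ satisfying the stated constraint. Then $\mathcal H$ $(r_1,r_2)$-recognizes $\mathcal C$: for every $B\subseteq C_0$ presented at time 0, (1) if $c\in supp_{r_2}(B)$ then at least $m(1-\epsilon)$ of the neurons $v\in reps(c)$ fire at time $level(c)$, and (2) if $c\notin supp_{r_1}(B)$ then no neuron $v\in reps(c)$ fires at time $level(c)$.
   Context: Concept hierarchies: fix positive integers $\ell_{max},n,k$. A universal set $D$ of concepts is partitioned into disjoint sets $D_0,\dots,D_{\ell_{max}}$ with $|D_0|=n$; $level(c)=\ell$ for $c\in D_\ell$. A concept hierarchy $\mathcal C$ consists of $C\subseteq D$, with $C_\ell=C\cap D_\ell$, and for each $c\in C_\ell$ with $1\le\ell\le\ell_{max}$ a set $children(c)\subseteq C_{\ell-1}$, such that $|C_{\ell_{max}}|=k$, $|children(c)|=k$ for all such $c$, and $children(c)\cap children(c')=\emptyset$ for distinct $c,c'\in C_\ell$. For $B\subseteq D_0$ and $r\in[0,1]$: $B(0)=B\cap C_0$; for $1\le\ell\le\ell_{max}$, $B(\ell)=\{c\in C_\ell:|children(c)\cap B(\ell-1)|\ge rk\}$; $supp_r(B)=\bigcup_{\ell}B(\ell)$. Network $\mathcal H$: neurons partitioned into layers $N_0,\dots,N_{\ell_{max}}$. Each $c\in D_0$ has a set $reps(c)$ of $m$ neurons in $N_0$, each $c\in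 C$ with $level(c)\ge1$ a set $reps(c)$ of $m$ neurons in $N_{level(c)}$, all pairwise disjoint. For $u\in N_{\ell-1}$, $v\in N_\ell$: $w(u,v)=1$ iff $v\in reps(c)$ and $u\in reps(c')$ for a child $c'$ of $c$, else $0$. Threshold $\tau=r_2km(1-\epsilon)$. A fixed set $F$ of neurons is failed (failed neurons never fire), such that for every concept $c$ at least $m(1-\epsilon)$ neurons of $reps(c)$ are not in $F$. Input $B\subseteq C_0$ presented at time 0: a layer-0 neuron fires at time 0 iff it is in $\bigcup_{b\in B}reps(b)\setminus F$, and no layer-0 neuron fires at any other time. A non-failed $v\in N_\ell$, $\ell\ge1$, does not fire at time 0 and fires at time $t\ge1$ iff $\sum_{u\in N_{\ell-1}}w(u,v)x_u(t-1)\ge\tau$, where $x_u(s)\in\{0,1\}$ indicates whether $u$ fires at time $s$. *)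

theory Defs
  imports Main "HOL.Real"
begin

definition lvl :: "'c set \<Rightarrow> ('c \<Rightarrow> nat) \<Rightarrow> nat \<Rightarrow> 'c set" where
  "lvl S level l = {c \<in> S. level c = l}"

definition concept_hierarchy ::
  "'c set \<Rightarrow> ('c \<Rightarrow> nat) \<Rightarrow> nat \<Rightarrow> nat \<Rightarrow> nat \<Rightarrow> 'c set \<Rightarrow> ('c \<Rightarrow> 'c set) \<Rightarrow> bool" where
  "concept_hierarchy D level lmax n k C children \<longleftrightarrow>
     (\<forall>c\<in>D. level c \<le> lmax) \<and>
     card (lvl D level 0) = n \<and>
     C \<subseteq> D \<and>
     card (lvl C level lmax) = k \<and>
     (\<forall>c\<in>C. 1 \<le> level c \<and> level c \<le> lmax \<longrightarrow>
        children c \<subseteq> lvl C level (level c - 1) \<and> card (children c) = k) \<and>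
     (\<forall>c\<in>C. \<forall>c'\<in>C. level c = level c' \<and> 1 \<le> level c \<and> c \<noteq> c' \<longrightarrow>
        children c \<inter> children c' = {})"

fun Bset :: "'c set \<Rightarrow> ('c \<Rightarrow> nat) \<Rightarrow> ('c \<Rightarrow> 'c set) \<Rightarrow> nat \<Rightarrow> real \<Rightarrow> 'c set \<Rightarrow> nat \<Rightarrow> 'c set" where
  "Bset C level children k r B 0 = B \<inter> lvl C level 0"
| "Bset C level children k r B (Suc l) =
     {c \<in> lvl C level (Suc l).
        real (card (children c \<inter> Bset C level children k r B l)) \<ge> r * real k}"

definition supp :: "'c set \<Rightarrow> ('c \<Rightarrow> nat) \<Rightarrow> ('c \<Rightarrow> 'c set) \<Rightarrow> nat \<Rightarrow> nat \<Rightarrow> real \<Rightarrow> 'c set \<Rightarrow> 'c set" where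
  "supp C level children lmax k r B = (\<Union>l\<in>{0..lmax}. Bset C level children k r B l)"

definition network_structure ::
  "'n set \<Rightarrow> ('n \<Rightarrow> nat) \<Rightarrow> nat \<Rightarrow> 'c set \<Rightarrow> ('c \<Rightarrow> nat) \<Rightarrow> 'c set \<Rightarrow> ('c \<Rightarrow> 'n set) \<Rightarrow> nat \<Rightarrow> bool" where
  "network_structure N layer lmax D level C reps m \<longleftrightarrow>
     finite N \<and>
     (\<forall>u\<in>N. layer u \<le> lmax) \<and>
     (\<forall>c\<in>lvl D level 0. reps c \<subseteq> lvl N layer 0 \<and> card (reps c) = m) \<and>
     (\<forall>c\<in>C. 1 \<le> level c \<longrightarrow> reps c \<subseteq> lvl N layer (level c) \<and> card (reps c) = m) \<and>
     (\<forall>c\<in>lvl D level 0 \<union> C. \<forall>c'\<in>lvl D level 0 \<union> C. c \<noteq> c' \<longrightarrow> reps c \<inter> reps c' = {})"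

definition weight :: "'c set \<Rightarrow> ('c \<Rightarrow> nat) \<Rightarrow> ('c \<Rightarrow> 'c set) \<Rightarrow> ('c \<Rightarrow> 'n set) \<Rightarrow> 'n \<Rightarrow> 'n \<Rightarrow> real" where
  "weight C level children reps u v =
     (if \<exists>c\<in>C. 1 \<le> level c \<and> v \<in> reps c \<and> (\<exists>c'\<in>children c. u \<in> reps c') then 1 else 0)"

text \<open>Firing: fires ... t u means neuron u fires at time t, given input neurons I
  (the representatives of the presented set B), failed set F, threshold tau.\<close>
fun fires :: "'n set \<Rightarrow> ('n \<Rightarrow> nat) \<Rightarrow> ('n \<Rightarrow> 'n \<Rightarrow> real) \<Rightarrow> real \<Rightarrow> 'n set \<Rightarrow> 'n set \<Rightarrow> nat \<Rightarrow> 'n \<Rightarrow> bool" where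
  "fires N layer w tau F I 0 u = (u \<in> N \<and> layer u = 0 \<and> u \<in> I \<and> u \<notin> F)"
| "fires N layer w tau F I (Suc t) u =
     (u \<in> N \<and> 1 \<le> layer u \<and> u \<notin> F \<and>
      (\<Sum>u'\<in>lvl N layer (layer u - 1). w u' u * (if fires N layer w tau F I t u' then 1 else 0)) \<ge> tau)"

end

theory Submission
  imports Defs
begin

lemma Bset_sub: "Bset C level children k r B l \<subseteq> lvl C level l"
  by (cases l) (auto simp: lvl_def)

theorem theorem7p5:
  fixes D C :: "'c set" and level :: "'c \<Rightarrow> nat" and children :: "'c \<Rightarrow> 'c set"
    and N F :: "'n set" and layer :: "'n \<Rightarrow> nat" and reps :: "'c \<Rightarrow> 'n set"
    and lmax n k m :: nat and r1 r2 \<epsilon> :: real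
  assumes "0 < lmax" "0 < n" "0 < k" "0 < m"
    and hier: "concept_hierarchy D level lmax n k C children"
    and "0 \<le> r1" "r1 \<le> 1" "0 \<le> r2" "r2 \<le> 1" "0 \<le> \<epsilon>" "\<epsilon> \<le> 1"
    and "r1 \<le> r2 * (1 - \<epsilon>)"
    and net: "network_structure N layer lmax D level C reps m"
    and faults: "\<forall>c\<in>lvl D level 0 \<union> C. real (card (reps c - F)) \<ge> real m * (1 - \<epsilon>)"
  shows "\<forall>B. B \<subseteq> lvl C level 0 \<longrightarrow>
     (\<forall>c\<in>supp C level children lmax k r2 B.
        real (card {v \<in> reps c. fires N layer (weight C level children reps)
                     (r2 * real k * real m * (1 - \<epsilon>)) F (\<Union>b\<in>B. reps b) (level c) v})
          \<ge> real m * (1 - \<epsilon>)) \<and>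
     (\<forall>c\<in>C - supp C level children lmax k r1 B. \<forall>v\<in>reps c.
        \<not> fires N layer (weight C level children reps)
             (r2 * real k * real m * (1 - \<epsilon>)) F (\<Union>b\<in>B. reps b) (level c) v)"
proof (intro allI impI conjI)
  fix B assume B: "B \<subseteq> lvl C level 0"
  define w where "w = weight C level children reps"
  define tau where "tau = r2 * real k * real m * (1 - \<epsilon>)"
  define I where "I = (\<Union>b\<in>B. reps b)"
  define fr where "fr = fires N layer w tau F I"
  have CD: "C \<subseteq> D" and lvD: "\<forall>c\<in>D. level c \<le> lmax"
    and ch: "\<And>c. c \<in> C \<Longrightarrow> 1 \<le> level c \<Longrightarrow> children c \<subseteq> lvl C level (level c - 1) \<and> card (children c) = k"
    using hier unfolding concept_hierarchy_def by auto
  have finN: "finite N" using net unfolding network_structure_def by auto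
  have repsC: "reps c \<subseteq> lvl N layer (level c) \<and> card (reps c) = m" if "c \<in> C" for c
  proof (cases "level c = 0")
    case True
    then have "c \<in> lvl D level 0" using that CD by (auto simp: lvl_def)
    then show ?thesis using net True unfolding network_structure_def by auto
  next
    case False
    then show ?thesis using net that unfolding network_structure_def by auto
  qed
  have disj: "reps c \<inter> reps c' = {}" if "c \<in> C" "c' \<in> C" "c \<noteq> c'" for c c'
    using net that unfolding network_structure_def by auto
  have finreps: "finite (reps c)" if "c \<in> C" for c
  proof -
    have "reps c \<subseteq> N" using repsC[OF that] by (auto simp: lvl_def)
    then show ?thesis using finN by (rule finite_subset)
  qed
  have faultsC: "real (card (reps c - F)) \<ge> real m * (1 - \<epsilon>)" if "c \<in> C" for c
    using faults that by auto
  have wv: "w u v = (if \<exists>c'\<in>children c. u \<in> reps c' then 1 else 0)"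
    if "c \<in> C" "1 \<le> level c" "v \<in> reps c" for c u v
  proof -
    have "(\<exists>c''\<in>C. 1 \<le> level c'' \<and> v \<in> reps c'' \<and> (\<exists>c'\<in>children c''. u \<in> reps c'))
          = (\<exists>c'\<in>children c. u \<in> reps c')"
    proof
      assume "\<exists>c''\<in>C. 1 \<le> level c'' \<and> v \<in> reps c'' \<and> (\<exists>c'\<in>children c''. u \<in> reps c')"
      then obtain c'' where h: "c'' \<in> C" "v \<in> reps c''" "\<exists>c'\<in>children c''. u \<in> reps c'" by blast
      have "c'' = c"
      proof (rule ccontr)
        assume "c'' \<noteq> c"
        then have "reps c \<inter> reps c'' = {}" using disj that(1) h(1) by simp
        then show False using h(2) that(3) by blast
      qed
      then show "\<exists>c'\<in>children c. u \<in> reps c'" using h(3) by simp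
    next
      assume "\<exists>c'\<in>children c. u \<in> reps c'"
      then show "\<exists>c''\<in>C. 1 \<le> level c'' \<and> v \<in> reps c'' \<and> (\<exists>c'\<in>children c''. u \<in> reps c')"
        using that by blast
    qed
    then show ?thesis unfolding w_def weight_def by simp
  qed
  have frSuc: "fr (Suc l) v = (v \<in> N \<and> 1 \<le> layer v \<and> v \<notin> F \<and>
      (\<Sum>u'\<in>lvl N layer (layer v - 1). w u' v * (if fr l u' then 1 else 0)) \<ge> tau)" for l v
    unfolding fr_def by simp
  have m0: "real m * (1 - \<epsilon>) \<ge> 0" using \<open>\<epsilon> \<le> 1\<close> by simp
  have P1: "c \<in> Bset C level children k r2 B l \<Longrightarrow> real (card {v\<in>reps c. fr l v}) \<ge> real m * (1 - \<epsilon>)"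
    for l c
  proof (induction l arbitrary: c)
    case 0
    then have c: "c \<in> C" "c \<in> B" "level c = 0" by (auto simp: lvl_def)
    have "reps c - F \<subseteq> {v\<in>reps c. fr 0 v}"
      using repsC[OF c(1)] c unfolding fr_def I_def by (auto simp: lvl_def)
    then have "card (reps c - F) \<le> card {v\<in>reps c. fr 0 v}"
      using finreps[OF c(1)] by (intro card_mono) auto
    then show ?case using faultsC[OF c(1)] by linarith
  next
    case (Suc l)
    define S where "S = children c \<inter> Bset C level children k r2 B l"
    have c: "c \<in> C" "level c = Suc l" and cardS: "real (card S) \<ge> r2 * real k"
      using Suc.prems by (auto simp: lvl_def S_def)
    have chc: "children c \<subseteq> lvl C level l" "card (children c) = k"
      using ch[OF c(1)] c(2) by auto
    have finS: "finite S" using chc \<open>0 < k\<close> unfolding S_def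
      by (simp add: card_ge_0_finite)
    have SC: "S \<subseteq> C" using chc unfolding S_def by (auto simp: lvl_def)
    define U where "U = (\<Union>c'\<in>S. {x\<in>reps c'. fr l x})"
    have UN: "U \<subseteq> lvl N layer l"
      proof
      fix x assume "x \<in> U"
      then obtain c' where "c' \<in> S" "x \<in> reps c'" unfolding U_def by auto
      moreover have "level c' = l" using \<open>c' \<in> S\<close> chc unfolding S_def by (auto simp: lvl_def)
      ultimately show "x \<in> lvl N layer l" using SC repsC by auto
    qed
    have finU: "finite U" using finS SC finreps unfolding U_def by auto
    have cardU: "card U = (\<Sum>c'\<in>S. card {x\<in>reps c'. fr l x})"
      unfolding U_def
    proof (rule card_UN_disjoint[OF finS])
      show "\<forall>i\<in>S. finite {x \<in> reps i. fr l x}" using SC finreps by auto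
      show "\<forall>i\<in>S. \<forall>j\<in>S. i \<noteq> j \<longrightarrow> {x \<in> reps i. fr l x} \<inter> {x \<in> reps j. fr l x} = {}"
        using SC disj by blast
    qed
    have "real (card U) = (\<Sum>c'\<in>S. real (card {x\<in>reps c'. fr l x}))"
      using cardU by simp
    also have "\<dots> \<ge> (\<Sum>c'\<in>S. real m * (1 - \<epsilon>))"
      by (rule sum_mono) (use Suc.IH S_def in auto)
    finally have "real (card U) \<ge> real (card S) * (real m * (1 - \<epsilon>))" by simp
    moreover have "real (card S) * (real m * (1 - \<epsilon>)) \<ge> r2 * real k * (real m * (1 - \<epsilon>))"
      using cardS m0 by (rule mult_right_mono)
    ultimately have Ut: "real (card U) \<ge> tau" unfolding tau_def by (simp add: mult.assoc)
    have "reps c - F \<subseteq> {v\<in>reps c. fr (Suc l) v}"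
    proof
      fix v assume v: "v \<in> reps c - F"
      have vN: "v \<in> N" "layer v = Suc l" using repsC[OF c(1)] v c(2) by (auto simp: lvl_def)
      have "real (card U) = (\<Sum>u'\<in>U. w u' v * (if fr l u' then 1 else 0))"
      proof -
        have "\<And>u'. u' \<in> U \<Longrightarrow> w u' v * (if fr l u' then 1 else 0) = 1"
          using wv[OF c(1) _ , of v] v c(2) unfolding U_def S_def by auto
        then show ?thesis by simp
      qed
      also have "\<dots> \<le> (\<Sum>u'\<in>lvl N layer l. w u' v * (if fr l u' then 1 else 0))"
        by (rule sum_mono2) (use finN UN in \<open>auto simp: lvl_def w_def weight_def\<close>)
      finally show "v \<in> {v\<in>reps c. fr (Suc l) v}"
        using frSuc vN v Ut by auto
    qed
    then have "card (reps c - F) \<le> card {v\<in>reps c. fr (Suc l) v}"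
      using finreps[OF c(1)] by (intro card_mono) auto
    then show ?case using faultsC[OF c(1)] by linarith
  qed
  have P2: "c \<in> C \<Longrightarrow> level c = l \<Longrightarrow> c \<notin> Bset C level children k r1 B l \<Longrightarrow> v \<in> reps c \<Longrightarrow> \<not> fr l v"
    for l c v
  proof (induction l arbitrary: c v)
    case 0
    have "v \<notin> I"
    proof
      assume "v \<in> I"
      then obtain b where b: "b \<in> B" "v \<in> reps b" unfolding I_def by auto
      have "b \<in> C" "b \<noteq> c" using b B 0 by (auto simp: lvl_def)
      then show False using disj[of c b] 0 b by auto
    qed
    then show ?case unfolding fr_def by simp
  next
    case (Suc l)
    define S where "S = children c \<inter> Bset C level children k r1 B l"
    have c: "c \<in> C" "level c = Suc l" using Suc.prems by auto
    have cardS: "real (card S) < r1 * real k"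
      using Suc.prems unfolding S_def by (auto simp: lvl_def)
    have chc: "children c \<subseteq> lvl C level l" "card (children c) = k"
      using ch[OF c(1)] c(2) by auto
    have finS: "finite S" using chc \<open>0 < k\<close> unfolding S_def
      by (simp add: card_ge_0_finite)
    have SC: "S \<subseteq> C" using chc unfolding S_def by (auto simp: lvl_def)
    define U where "U = (\<Union>c'\<in>S. reps c')"
    have finU: "finite U" using finS SC finreps unfolding U_def by auto
    show ?case
    proof
      assume fv: "fr (Suc l) v"
      have vN: "layer v = Suc l" using repsC[OF c(1)] Suc.prems c(2) by (auto simp: lvl_def)
      have trm: "w u' v * (if fr l u' then 1 else 0) \<le> (if u' \<in> U then 1 else 0)" for u'
      proof (cases "\<exists>c'\<in>children c. u' \<in> reps c'")
        case True
        then obtain c' where c': "c' \<in> children c" "u' \<in> reps c'" by auto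
        have c'C: "c' \<in> C" "level c' = l" using c'(1) chc by (auto simp: lvl_def)
        show ?thesis
        proof (cases "c' \<in> S")
          case True then show ?thesis using c' wv[OF c(1) _ Suc.prems(4)] c(2) unfolding U_def by auto
        next
          case False
          then have "\<not> fr l u'" using Suc.IH[OF c'C] c'(2) c'(1) unfolding S_def by auto
          then show ?thesis by simp
        qed
      next
        case False
        then show ?thesis using wv[OF c(1) _ Suc.prems(4)] c(2) by simp
      qed
      have "tau \<le> (\<Sum>u'\<in>lvl N layer l. w u' v * (if fr l u' then 1 else 0))"
        using fv frSuc vN by simp
      also have "\<dots> \<le> (\<Sum>u'\<in>lvl N layer l. (if u' \<in> U then 1 else 0))"
        by (rule sum_mono) (rule trm)
      also have "\<dots> = real (card (lvl N layer l \<inter> U))"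
        by (simp add: sum.If_cases finN lvl_def)
      also have "\<dots> \<le> real (card U)" using finU by (simp add: card_mono)
      also have "real (card U) \<le> real (\<Sum>c'\<in>S. card (reps c'))"
        unfolding U_def of_nat_le_iff by (rule card_UN_le[OF finS])
      also have "(\<Sum>c'\<in>S. card (reps c')) = card S * m"
      proof -
        have "(\<Sum>c'\<in>S. card (reps c')) = (\<Sum>c'\<in>S. m)"
          by (rule sum.cong) (use SC repsC in auto)
        then show ?thesis by simp
      qed
      finally have "tau \<le> real (card S) * real m" by simp
      moreover have "real (card S) * real m < r1 * real k * real m"
        using cardS \<open>0 < m\<close> by simp
      moreover have "r1 * real k * real m \<le> tau"
        unfolding tau_def using \<open>r1 \<le> r2 * (1 - \<epsilon>)\<close> \<open>0 < k\<close> \<open>0 < m\<close>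
        by (simp add: mult_right_mono mult.commute mult.left_commute)
      ultimately show False by linarith
    qed
  qed
  show "\<forall>c\<in>supp C level children lmax k r2 B.
        real (card {v \<in> reps c. fires N layer (weight C level children reps)
                     (r2 * real k * real m * (1 - \<epsilon>)) F (\<Union>b\<in>B. reps b) (level c) v})
          \<ge> real m * (1 - \<epsilon>)"
  proof
    fix c assume "c \<in> supp C level children lmax k r2 B"
    then obtain l where l: "c \<in> Bset C level children k r2 B l" unfolding supp_def by auto
    then have "level c = l" using Bset_sub by (fastforce simp: lvl_def)
    then show "real (card {v \<in> reps c. fires N layer (weight C level children reps)
                     (r2 * real k * real m * (1 - \<epsilon>)) F (\<Union>b\<in>B. reps b) (level c) v})
          \<ge> real m * (1 - \<epsilon>)"
      using P1[OF l] unfolding fr_def w_def tau_def I_def by simp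
  qed
  show "\<forall>c\<in>C - supp C level children lmax k r1 B. \<forall>v\<in>reps c.
        \<not> fires N layer (weight C level children reps)
             (r2 * real k * real m * (1 - \<epsilon>)) F (\<Union>b\<in>B. reps b) (level c) v"
  proof (intro ballI)
    fix c v assume c: "c \<in> C - supp C level children lmax k r1 B" and v: "v \<in> reps c"
    have "level c \<le> lmax" using c CD lvD by auto
    then have "c \<notin> Bset C level children k r1 B (level c)" using c unfolding supp_def by auto
    then have "\<not> fr (level c) v" using P2 c v by auto
    then show "\<not> fires N layer (weight C level children reps)
             (r2 * real k * real m * (1 - \<epsilon>)) F (\<Union>b\<in>B. reps b) (level c) v"
      unfolding fr_def w_def tau_def I_def by simp
  qed
qed

end
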